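(* Consider the algorithm SCHEMATIC-ALGO$(G,\mu^*,m^*,\Delta^*,\gamma)$ described in the context. Suppose we are at the start of round $k$ for some $k\ge1$; let $H_k$ denote the current set $H$, and let $U_k$ be the set of edges in $E\setminus H_k$ that are underfull w.r.t. $H_k$. If $|U_k|\ge\mu^*\cdot(\Delta^* )^\gamma$, then with high probability the algorithm does not terminate at the end of round $k$ (i.e. it proceeds to round $k+1$).
   Context: Let $G=(V,E)$ be a graph with $n$ vertices, $m$ edges, average degree $d$; $\mu(G)$ is its maximum matching size. Fix a small constant $\epsilon\in(0,1)$ and $\beta:=1/\Theta(\epsilon^3)$. For $H\subseteq E$ and a pair $e=(u,v)$, $\deg_e(H):=\deg_u(H)+\deg_v(H)$. An edge $e$ is underfull w.r.t. $H$ if $\deg_e(H)<(1-\epsilon)\beta$ and overfull w.r.t. $H$ if $\deg_e(H)>\beta$. The parameters satisfy $\mu(G)/(2+\epsilon)\le\mu^*\le n$, $d\le\Delta^*\le n$, $m^*\ge m$, $0<\gamma<1$. SCHEMATIC-ALGO: set $H\leftarrow\emptyset$. Repeat rounds: in each round set Status $\leftarrow$ false; for $i=1,\dots,(100m^*\log n)/(\mu^*(\Delta^* )^\gamma)$, sample an edge $e\in E$ uniformly at random (independently, with repetition); if $e\in E\setminus H$ and $e$ is underfull w.r.t. $H$, then set Status $\leftarrow$ true, $H\leftarrow H\cup\{e\}$, and then while some edge of $H$ is overfull w.r.t. $H$, remove such an edge from $H$. If at the end of a round Status is false, stop the rounds (this is the last round). Then let $U$ be the set of edges of $E\setminus H$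 underfull w.r.t. $H$, take any $V_{small}\subseteq V$ with $\{v:\deg_v(U)\le (1-\epsilon)(\Delta^* )^\gamma/\epsilon\}\subseteq V_{small}\subseteq\{v:\deg_v(U)\le(1+\epsilon)(\Delta^* )^\gamma/\epsilon\}$, let $E_{small}:=\{(u,v)\in H\cup U: u,v\in V_{small}\}$, and return $\mu(E_{small})$. "With high probability" means with probability at least $1-1/\mathrm{poly}(n)$. *)

theory Defs
  imports Complex_Main
begin

definition graph :: "'a set \<Rightarrow> 'a set set \<Rightarrow> bool" where
  "graph V E \<longleftrightarrow> finite V \<and> (\<forall>e\<in>E. e \<subseteq> V \<and> card e = 2)"

definition deg :: "'a set set \<Rightarrow> 'a \<Rightarrow> nat" where
  "deg H v = card {e \<in> H. v \<in> e}"

definition edeg :: "'a set set \<Rightarrow> 'a set \<Rightarrow> nat" where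
  "edeg H e = (\<Sum>v\<in>e. deg H v)"

definition underfull :: "real \<Rightarrow> real \<Rightarrow> 'a set set \<Rightarrow> 'a set \<Rightarrow> bool" where
  "underfull eps beta H e \<longleftrightarrow> real (edeg H e) < (1 - eps) * beta"

definition overfull :: "real \<Rightarrow> 'a set set \<Rightarrow> 'a set \<Rightarrow> bool" where
  "overfull beta H e \<longleftrightarrow> real (edeg H e) > beta"

definition matching :: "'a set set \<Rightarrow> bool" where
  "matching M \<longleftrightarrow> (\<forall>e\<in>M. \<forall>f\<in>M. e \<noteq> f \<longrightarrow> e \<inter> f = {})"

definition max_matching :: "'a set set \<Rightarrow> nat" where
  "max_matching E = Max (card ` {M. M \<subseteq> E \<and> matching M})"

text \<open>The inner while-loop: repeatedly remove some overfull edge of H until none is left.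
  Any choice of the removed edge is allowed.\<close>
inductive cleanup :: "real \<Rightarrow> 'a set set \<Rightarrow> 'a set set \<Rightarrow> bool" for beta where
  cl_done: "(\<forall>e\<in>H. \<not> overfull beta H e) \<Longrightarrow> cleanup beta H H"
| cl_rem: "e \<in> H \<Longrightarrow> overfull beta H e \<Longrightarrow> cleanup beta (H - {e}) H' \<Longrightarrow> cleanup beta H H'"

inductive sample_step :: "real \<Rightarrow> real \<Rightarrow> 'a set set \<Rightarrow> bool \<Rightarrow> 'a set set \<Rightarrow> 'a set
    \<Rightarrow> bool \<Rightarrow> 'a set set \<Rightarrow> bool" for eps beta E where
  hit: "e \<in> E - H \<Longrightarrow> underfull eps beta H e \<Longrightarrow> cleanup beta (insert e H) H'
        \<Longrightarrow> sample_step eps beta E st H e True H'"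
| miss: "\<not> (e \<in> E - H \<and> underfull eps beta H e) \<Longrightarrow> sample_step eps beta E st H e st H"

inductive round_run :: "real \<Rightarrow> real \<Rightarrow> 'a set set \<Rightarrow> bool \<Rightarrow> 'a set set \<Rightarrow> 'a set list
    \<Rightarrow> bool \<Rightarrow> 'a set set \<Rightarrow> bool" for eps beta E where
  nil: "round_run eps beta E st H [] st H"
| cons: "sample_step eps beta E st H e st1 H1 \<Longrightarrow> round_run eps beta E st1 H1 es st' H'
         \<Longrightarrow> round_run eps beta E st H (e # es) st' H'"

definition num_samples :: "nat \<Rightarrow> real \<Rightarrow> real \<Rightarrow> real \<Rightarrow> real \<Rightarrow> nat" where
  "num_samples n mu_s m_s Delta_s gamma =
     nat \<lfloor>100 * m_s * ln (real n) / (mu_s * Delta_s powr gamma)\<rfloor>"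

text \<open>Possible values of H at the start of round k (k \<ge> 1): round 1 starts with the empty set;
  round k+1 is entered from the end of round k iff Status was set to true during round k.\<close>
inductive round_start :: "real \<Rightarrow> real \<Rightarrow> 'a set set \<Rightarrow> nat \<Rightarrow> nat \<Rightarrow> 'a set set \<Rightarrow> bool"
  for eps beta E T where
  rs_first: "round_start eps beta E T 1 {}"
| rs_next: "round_start eps beta E T k H \<Longrightarrow> set xs \<subseteq> E \<Longrightarrow> length xs = T
         \<Longrightarrow> round_run eps beta E False H xs True H' \<Longrightarrow> round_start eps beta E T (Suc k) H'"

text \<open>Sample sequences of a round: lists of length T over E (uniform, independent, with repetition).\<close>
definition sample_seqs :: "'a set set \<Rightarrow> nat \<Rightarrow> 'a set list set" where
  "sample_seqs E T = {xs. set xs \<subseteq> E \<and> length xs = T}"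

text \<open>Probability that, starting round with H, the algorithm proceeds to the next round
  (i.e. Status is true at the end of the round, for every resolution of the removal choices).\<close>
definition prob_proceed :: "real \<Rightarrow> real \<Rightarrow> 'a set set \<Rightarrow> nat \<Rightarrow> 'a set set \<Rightarrow> real" where
  "prob_proceed eps beta E T H =
     real (card {xs \<in> sample_seqs E T. \<forall>st' H'. round_run eps beta E False H xs st' H' \<longrightarrow> st'})
     / real (card E) ^ T"

end

theory Submission
  imports Defs
begin

lemma run_true:
  "round_run eps beta E st H xs st' H' \<Longrightarrow> st \<Longrightarrow> st'"
proof (induction rule: round_run.induct)
  case (nil st H) then show ?case by simp
next
  case (cons st H e st1 H1 es st' H')
  from cons.hyps(1) cons.prems have "st1"
    by (cases rule: sample_step.cases) auto
  then show ?case using cons.IH by simp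
qed

lemma run_false:
  "round_run eps beta E st H xs st' H' \<Longrightarrow> \<not> st' \<Longrightarrow>
     (\<forall>x\<in>set xs. \<not> (x \<in> E - H \<and> underfull eps beta H x))"
proof (induction rule: round_run.induct)
  case (nil st H) then show ?case by simp
next
  case (cons st H e st1 H1 es st' H')
  have "\<not> st1" using run_true[OF cons.hyps(2)] cons.prems by blast
  from cons.hyps(1) this have "H1 = H \<and> \<not> (e \<in> E - H \<and> underfull eps beta H e)"
    by (cases rule: sample_step.cases) auto
  then show ?case using cons.IH cons.prems by auto
qed

lemma key_ineq:
  fixes t :: real and T n :: nat
  assumes "0 \<le> t" "t \<le> 1" "n \<ge> 2" "real T * t \<ge> 100 * ln (real n) - 1"
  shows "(1 - t) ^ T \<le> 1 / real n"
proof -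
  have "(1 - t) ^ T \<le> exp (- t) ^ T"
    by (rule power_mono) (use exp_ge_add_one_self[of "-t"] assms in auto)
  also have "\<dots> = exp (- (real T * t))"
    by (metis exp_of_nat_mult mult.commute mult_minus_right)
  also have "\<dots> \<le> exp (1 - 100 * ln (real n))" using assms(4) by simp
  also have "\<dots> = exp 1 / real n ^ 100"
  proof -
    have "exp (1 - 100 * ln (real n)) = exp 1 / exp (100 * ln (real n))"
      by (simp add: exp_diff)
    also have "exp (100 * ln (real n)) = real n ^ 100"
    proof -
      have "exp (100 * ln (real n)) = exp (ln (real n)) ^ 100"
        using exp_of_nat_mult[of 100 "ln (real n)"] by simp
      then show ?thesis using assms(3) by simp
    qed
    finally show ?thesis .
  qed
  also have "\<dots> \<le> 1 / real n"
  proof -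
    have n2: "real n \<ge> 2" using assms(3) by simp
    have "(2::real) ^ 99 \<le> real n ^ 99" by (rule power_mono) (use n2 in auto)
    hence "3 \<le> real n ^ 99" by simp
    hence "exp 1 \<le> real n ^ 99" using exp_le by linarith
    hence "exp 1 * real n \<le> real n ^ 99 * real n" using n2 by simp
    also have "\<dots> = real n ^ 100" by (simp add: power_Suc2[symmetric])
    finally have "exp 1 * real n \<le> real n ^ 100" .
    thus ?thesis using n2 by (simp add: field_simps)
  qed
  finally show ?thesis .
qed

theorem lemma3p2:
  fixes eps beta :: real
  assumes "0 < eps" "eps < 1" "0 < beta"
  shows "\<exists>c>0. \<forall>(V :: 'a set) E mu_s m_s Delta_s gamma k H.
     graph V E \<and>
     real (max_matching E) / (2 + eps) \<le> mu_s \<and> mu_s \<le> real (card V) \<and> 0 < mu_s \<and>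
     2 * real (card E) / real (card V) \<le> Delta_s \<and> Delta_s \<le> real (card V) \<and> 0 < Delta_s \<and>
     real (card E) \<le> m_s \<and> 0 < gamma \<and> gamma < 1 \<and>
     1 \<le> k \<and>
     round_start eps beta E (num_samples (card V) mu_s m_s Delta_s gamma) k H \<and>
     real (card {e \<in> E - H. underfull eps beta H e}) \<ge> mu_s * Delta_s powr gamma
     \<longrightarrow> prob_proceed eps beta E (num_samples (card V) mu_s m_s Delta_s gamma) H
           \<ge> 1 - 1 / real (card V) powr c"
proof (intro exI[of _ 1] conjI allI impI)
  fix V :: "'a set" and E mu_s m_s Delta_s gamma k H
  assume A: "graph V E \<and>
     real (max_matching E) / (2 + eps) \<le> mu_s \<and> mu_s \<le> real (card V) \<and> 0 < mu_s \<and>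
     2 * real (card E) / real (card V) \<le> Delta_s \<and> Delta_s \<le> real (card V) \<and> 0 < Delta_s \<and>
     real (card E) \<le> m_s \<and> 0 < gamma \<and> gamma < 1 \<and>
     1 \<le> k \<and>
     round_start eps beta E (num_samples (card V) mu_s m_s Delta_s gamma) k H \<and>
     real (card {e \<in> E - H. underfull eps beta H e}) \<ge> mu_s * Delta_s powr gamma"
  define T where "T = num_samples (card V) mu_s m_s Delta_s gamma"
  define U where "U = {e \<in> E - H. underfull eps beta H e}"
  define n where "n = card V"
  define m where "m = card E"
  define u where "u = card U"
  define D where "D = mu_s * Delta_s powr gamma"
  have finV: "finite V" and sub: "\<forall>e\<in>E. e \<subseteq> V \<and> card e = 2"
    using A unfolding graph_def by auto
  have finE: "finite E"
    using sub finV proof -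
    have "E \<subseteq> Pow V" using sub by auto
    then show ?thesis using finV finite_subset by blast
  qed
  have Dpos: "D > 0" unfolding D_def using A by simp
  have uD: "real u \<ge> D" using A unfolding u_def U_def D_def by simp
  have upos: "u > 0" using uD Dpos by linarith
  have UE: "U \<subseteq> E" unfolding U_def by auto
  have um: "u \<le> m" unfolding u_def m_def using UE finE card_mono by blast
  have mpos: "m > 0" using um upos by linarith
  have "U \<noteq> {}" using upos unfolding u_def by auto
  then obtain e where eU: "e \<in> U" by blast
  hence "e \<subseteq> V" "card e = 2" using sub UE by auto
  hence n2: "n \<ge> 2" unfolding n_def using finV card_mono[OF finV] by metis
  have ms: "real m \<le> m_s" using A unfolding m_def by simp
  define x where "x = 100 * m_s * ln (real n) / D"
  have lnpos: "ln (real n) > 0" using n2 by simp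
  have x0: "x \<ge> 0" unfolding x_def using Dpos lnpos ms by simp
  have Tx: "real T \<ge> x - 1"
  proof -
    have TT: "T = nat \<lfloor>x\<rfloor>" unfolding T_def num_samples_def x_def D_def n_def by simp
    have "x - 1 < real_of_int \<lfloor>x\<rfloor>" by (rule real_of_int_floor_gt_diff_one)
    moreover have "\<lfloor>x\<rfloor> \<ge> 0" using x0 by simp
    ultimately show ?thesis unfolding TT using of_nat_nat by fastforce
  qed
  have xu: "x * (real u / real m) \<ge> 100 * ln (real n)"
  proof -
    have "x * (real u / real m) = 100 * ln (real n) * ((m_s / real m) * (real u / D))"
      unfolding x_def using mpos Dpos by (simp add: field_simps)
    moreover have "m_s / real m \<ge> 1" using ms mpos by simp
    moreover have "real u / D \<ge> 1" using uD Dpos by simp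
    moreover have "(m_s / real m) * (real u / D) \<ge> 1"
      using calculation(2,3) by (metis mult_mono' mult_1 zero_le_one)
    ultimately have "100 * ln (real n) * 1 \<le> 100 * ln (real n) * ((m_s / real m) * (real u / D))"
      using lnpos by (intro mult_left_mono) auto
    with \<open>x * (real u / real m) = _\<close> show ?thesis by simp
  qed
  define t where "t = real u / real m"
  have t0: "0 \<le> t" and t1: "t \<le> 1" unfolding t_def using um mpos by auto
  have Tt: "real T * t \<ge> 100 * ln (real n) - 1"
  proof -
    have "real T * t \<ge> (x - 1) * t" using Tx t0 by (simp add: mult_right_mono)
    also have "(x - 1) * t = x * t - t" by (simp add: algebra_simps)
    finally show ?thesis using xu t1 unfolding t_def by linarith
  qed
  have bound: "(1 - t) ^ T \<le> 1 / real n" by (rule key_ineq[OF t0 t1 n2 Tt])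
  define Good where "Good = {xs \<in> sample_seqs E T. \<forall>st' H'. round_run eps beta E False H xs st' H' \<longrightarrow> st'}"
  define Bad where "Bad = {xs. set xs \<subseteq> E - U \<and> length xs = T}"
  have cover: "sample_seqs E T \<subseteq> Good \<union> Bad"
  proof
    fix xs assume xs: "xs \<in> sample_seqs E T"
    show "xs \<in> Good \<union> Bad"
    proof (cases "\<forall>st' H'. round_run eps beta E False H xs st' H' \<longrightarrow> st'")
      case True then show ?thesis using xs unfolding Good_def by auto
    next
      case False
      then obtain st' H' where r: "round_run eps beta E False H xs st' H'" "\<not> st'" by auto
      from run_false[OF r] have "\<forall>x\<in>set xs. x \<notin> U" unfolding U_def by auto
      then show ?thesis using xs unfolding Bad_def sample_seqs_def by auto
    qed
  qed
  have finS: "finite (sample_seqs E T)"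
    unfolding sample_seqs_def using finite_lists_length_eq[OF finE] by simp
  have finGood: "finite Good" unfolding Good_def using finS by simp
  have finBad: "finite Bad" unfolding Bad_def using finite_lists_length_eq finE by auto
  have cS: "card (sample_seqs E T) = m ^ T"
    unfolding sample_seqs_def m_def by (rule card_lists_length_eq[OF finE])
  have cB: "card Bad = (m - u) ^ T"
  proof -
    have "card Bad = card (E - U) ^ T" unfolding Bad_def
      by (rule card_lists_length_eq) (use finE in simp)
    moreover have "card (E - U) = m - u"
      unfolding m_def u_def using card_Diff_subset[OF finite_subset[OF UE finE] UE] .
    ultimately show ?thesis by simp
  qed
  have "m ^ T \<le> card (Good \<union> Bad)" using cS card_mono[OF _ cover] finGood finBad by simp
  also have "\<dots> \<le> card Good + card Bad" by (rule card_Un_le)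
  finally have cnt: "real (m ^ T) - real ((m - u) ^ T) \<le> real (card Good)" using cB by linarith
  have mT: "real m ^ T > 0" using mpos by simp
  have "prob_proceed eps beta E T H = real (card Good) / real m ^ T"
    unfolding prob_proceed_def Good_def m_def by simp
  also have "\<dots> \<ge> (real m ^ T - real (m - u) ^ T) / real m ^ T"
    using cnt mT by (simp add: divide_right_mono)
  finally have p1: "prob_proceed eps beta E T H \<ge> 1 - (real (m - u) / real m) ^ T"
    using mT mpos by (simp add: diff_divide_distrib power_divide)
  have "real (m - u) / real m = 1 - t" unfolding t_def using um mpos by (simp add: field_simps of_nat_diff)
  hence "prob_proceed eps beta E T H \<ge> 1 - 1 / real n" using p1 bound by simp
  then show "prob_proceed eps beta E (num_samples (card V) mu_s m_s Delta_s gamma) H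
           \<ge> 1 - 1 / real (card V) powr 1"
    unfolding T_def n_def using n2 n_def by simp
qed simp

end
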